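(* A simply laced (unitary) quiver admits a single unique Coulomb branch: the Coulomb branch computed by the monopole formula does not depend on the choice of node at which the residual center-of-mass $U(1)$ is ungauged.
   Context: Consider a $3d~\mathcal N=4$ quiver gauge theory whose quiver consists solely of unitary gauge nodes $U(N_i)$ (no flavor nodes). To compute its Coulomb branch via the monopole formula (Hilbert series), one must ungauge (decouple) a residual center-of-mass $U(1)$ symmetry, which is done by choosing a node and setting one of the magnetic charges at that node to zero (introducing a delta function on one component of the magnetic flux there); this choice is called the ungauging scheme. In the conformal dimension, the hypermultiplet contribution of an edge between nodes with magnetic fluxes $m^{(1)}, m^{(2)}$ is $\frac12\sum_{j,k}|\lambda m^{(1)}_j - m^{(2)}_k|$, with $\lambda=1$ for simply laced edges. A quiver is simply laced if all its edges are single edges (multiplicity $1$). *)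

theory Defs
  imports "HOL-Analysis.Analysis" "HOL-Computational_Algebra.Formal_Power_Series"
begin

text \<open>A unitary quiver without flavour nodes: nodes 0..n-1, node a carries gauge group U(N a);
  edges are triples (a, b, l) with lacing/multiplicity l (l = 1 is a single, simply laced edge).
  A magnetic flux is m :: nat => nat => int, m a j being the j-th magnetic charge at node a
  (j < N a); it vanishes outside this range.\<close>

definition quiver_wf :: "nat \<Rightarrow> (nat \<Rightarrow> nat) \<Rightarrow> (nat \<times> nat \<times> nat) list \<Rightarrow> bool" where
  "quiver_wf n N E \<longleftrightarrow> (\<forall>a<n. N a \<ge> 1) \<and> (\<forall>(a,b,l)\<in>set E. a < n \<and> b < n \<and> l \<ge> 1)"

definition quiver_connected :: "nat \<Rightarrow> (nat \<times> nat \<times> nat) list \<Rightarrow> bool" where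
  "quiver_connected n E \<longleftrightarrow>
     (\<forall>a<n. \<forall>b<n. (a, b) \<in> ({(x, y). \<exists>l. (x, y, l) \<in> set E \<or> (y, x, l) \<in> set E})\<^sup>*)"

definition simply_laced :: "(nat \<times> nat \<times> nat) list \<Rightarrow> bool" where
  "simply_laced E \<longleftrightarrow> (\<forall>(a,b,l)\<in>set E. l = 1)"

definition flux_space :: "nat \<Rightarrow> (nat \<Rightarrow> nat) \<Rightarrow> (nat \<Rightarrow> nat \<Rightarrow> int) set" where
  "flux_space n N = {m. \<forall>a j. (n \<le> a \<or> N a \<le> j) \<longrightarrow> m a j = 0}"

definition dominant :: "nat \<Rightarrow> (nat \<Rightarrow> nat) \<Rightarrow> (nat \<Rightarrow> nat \<Rightarrow> int) \<Rightarrow> bool" where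
  "dominant n N m \<longleftrightarrow> (\<forall>a<n. \<forall>j k. j \<le> k \<and> k < N a \<longrightarrow> m a k \<le> m a j)"

text \<open>Twice the conformal dimension:
  2\<Delta> = \<Sum>_edges \<Sum>_{j,k} |l m^a_j - m^b_k|  -  2 \<Sum>_a \<Sum>_{j<k} |m^a_j - m^a_k|.\<close>
definition conf_dim2 :: "nat \<Rightarrow> (nat \<Rightarrow> nat) \<Rightarrow> (nat \<times> nat \<times> nat) list \<Rightarrow> (nat \<Rightarrow> nat \<Rightarrow> int) \<Rightarrow> int" where
  "conf_dim2 n N E m =
     sum_list (map (\<lambda>(a, b, l). \<Sum>j<N a. \<Sum>k<N b. \<bar>int l * m a j - m b k\<bar>) E)
     - 2 * (\<Sum>a<n. \<Sum>j<N a. \<Sum>k<N a. if j < k then \<bar>m a j - m a k\<bar> else 0)"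

definition dressing_node :: "(nat \<Rightarrow> nat) \<Rightarrow> nat \<Rightarrow> (nat \<Rightarrow> nat \<Rightarrow> int) \<Rightarrow> real fps" where
  "dressing_node N a m =
     (\<Prod>v\<in>(\<lambda>j. m a j) ` {..<N a}.
        \<Prod>k\<in>{1..card {j. j < N a \<and> m a j = v}}. inverse (1 - fps_X ^ (2 * k)))"

definition dressing :: "nat \<Rightarrow> (nat \<Rightarrow> nat) \<Rightarrow> (nat \<Rightarrow> nat \<Rightarrow> int) \<Rightarrow> real fps" where
  "dressing n N m = (\<Prod>a<n. dressing_node N a m)"

text \<open>Dressing after removing the decoupled centre-of-mass U(1): (1 - t^2) P_G(t, m).\<close>
definition reduced_dressing :: "nat \<Rightarrow> (nat \<Rightarrow> nat) \<Rightarrow> (nat \<Rightarrow> nat \<Rightarrow> int) \<Rightarrow> real fps" where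
  "reduced_dressing n N m = (1 - fps_X ^ 2) * dressing n N m"

text \<open>Ungauging scheme (i, k): the k-th magnetic charge at node i is set to zero.\<close>
definition ungauged_fluxes :: "nat \<Rightarrow> (nat \<Rightarrow> nat) \<Rightarrow> nat \<Rightarrow> nat \<Rightarrow> (nat \<Rightarrow> nat \<Rightarrow> int) set" where
  "ungauged_fluxes n N i k = {m \<in> flux_space n N. dominant n N m \<and> m i k = 0}"

text \<open>Monopole formula HS(t) = \<Sum>_m t^(2\<Delta>(m)) (1-t^2) P_G(t,m), as a formal Laurent series
  in t: the coefficient of t^d, valued in [0,\<infinity>] (so it is always defined).\<close>
definition hilbert_series ::
  "nat \<Rightarrow> (nat \<Rightarrow> nat) \<Rightarrow> (nat \<times> nat \<times> nat) list \<Rightarrow> nat \<Rightarrow> nat \<Rightarrow> int \<Rightarrow> ennreal" where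
  "hilbert_series n N E i k d =
     (\<integral>\<^sup>+ m. ennreal (if conf_dim2 n N E m \<le> d
                        then fps_nth (reduced_dressing n N m) (nat (d - conf_dim2 n N E m))
                        else 0)
        \<partial>count_space (ungauged_fluxes n N i k))"

end

theory Submission
  imports Defs
begin

definition shiftf :: "nat \<Rightarrow> (nat \<Rightarrow> nat) \<Rightarrow> int \<Rightarrow> (nat \<Rightarrow> nat \<Rightarrow> int) \<Rightarrow> (nat \<Rightarrow> nat \<Rightarrow> int)" where
  "shiftf n N c m = (\<lambda>a j. if a < n \<and> j < N a then m a j + c else 0)"

lemma shiftf_flux: "shiftf n N c m \<in> flux_space n N"
  unfolding flux_space_def shiftf_def by auto

lemma shiftf_inv: "m \<in> flux_space n N \<Longrightarrow> shiftf n N d (shiftf n N c m) = shiftf n N (c + d) m"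
  unfolding shiftf_def by (auto simp: fun_eq_iff)

lemma shiftf_0: "m \<in> flux_space n N \<Longrightarrow> shiftf n N 0 m = m"
  unfolding shiftf_def flux_space_def by (auto simp: fun_eq_iff)

lemma shiftf_dom: "dominant n N m \<Longrightarrow> dominant n N (shiftf n N c m)"
  unfolding dominant_def shiftf_def by auto

lemma shiftf_conf:
  assumes "quiver_wf n N E" "simply_laced E"
  shows "conf_dim2 n N E (shiftf n N c m) = conf_dim2 n N E m"
proof -
  have 1: "map (\<lambda>(a, b, l). \<Sum>j<N a. \<Sum>k<N b. \<bar>int l * shiftf n N c m a j - shiftf n N c m b k\<bar>) E
      = map (\<lambda>(a, b, l). \<Sum>j<N a. \<Sum>k<N b. \<bar>int l * m a j - m b k\<bar>) E"
  proof (rule map_cong[OF refl])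
    fix x assume x: "x \<in> set E"
    obtain a b l where xe: "x = (a,b,l)" by (cases x) auto
    have "a < n" "b < n" "l = 1" using assms x xe unfolding quiver_wf_def simply_laced_def by auto
    then show "(\<lambda>(a, b, l). \<Sum>j<N a. \<Sum>k<N b. \<bar>int l * shiftf n N c m a j - shiftf n N c m b k\<bar>) x
      = (\<lambda>(a, b, l). \<Sum>j<N a. \<Sum>k<N b. \<bar>int l * m a j - m b k\<bar>) x"
      unfolding xe shiftf_def by (auto intro!: sum.cong)
  qed
  have 2: "(\<Sum>a<n. \<Sum>j<N a. \<Sum>k<N a. if j < k then \<bar>shiftf n N c m a j - shiftf n N c m a k\<bar> else 0)
      = (\<Sum>a<n. \<Sum>j<N a. \<Sum>k<N a. if j < k then \<bar>m a j - m a k\<bar> else 0)"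
    unfolding shiftf_def by (auto intro!: sum.cong)
  show ?thesis unfolding conf_dim2_def 1 2 ..
qed

lemma shiftf_dn:
  assumes "a < n"
  shows "dressing_node N a (shiftf n N c m) = dressing_node N a m"
proof -
  have im: "(\<lambda>j. shiftf n N c m a j) ` {..<N a} = (\<lambda>v. v + c) ` ((\<lambda>j. m a j) ` {..<N a})"
    using assms unfolding shiftf_def by (auto simp: image_image)
  have cd: "{j. j < N a \<and> shiftf n N c m a j = v + c} = {j. j < N a \<and> m a j = v}" for v
    using assms unfolding shiftf_def by auto
  show ?thesis
    unfolding dressing_node_def im
    by (subst prod.reindex) (auto simp: inj_on_def cd)
qed

lemma shiftf_rd:
  "reduced_dressing n N (shiftf n N c m) = reduced_dressing n N m"
proof -
  have "(\<Prod>a<n. dressing_node N a (shiftf n N c m)) = (\<Prod>a<n. dressing_node N a m)"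
    by (rule prod.cong) (auto simp: shiftf_dn)
  thus ?thesis by (simp add: reduced_dressing_def dressing_def)
qed

theorem claim2:
  fixes n :: nat and N :: "nat \<Rightarrow> nat" and E :: "(nat \<times> nat \<times> nat) list"
    and i k i' k' :: nat
  assumes "quiver_wf n N E"
    and "quiver_connected n E"
    and "simply_laced E"
    and "i < n" and "k < N i"
    and "i' < n" and "k' < N i'"
  shows "hilbert_series n N E i k = hilbert_series n N E i' k'"
proof (rule ext)
  fix d
  define F where "F = (\<lambda>m. ennreal (if conf_dim2 n N E m \<le> d
                        then fps_nth (reduced_dressing n N m) (nat (d - conf_dim2 n N E m))
                        else 0))"
  have FS: "F (shiftf n N c m) = F m" for c m
    unfolding F_def shiftf_conf[OF assms(1,3)] shiftf_rd ..
  define g where "g = (\<lambda>m. shiftf n N (- m i' k') m)"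
  let ?A = "ungauged_fluxes n N i k" and ?B = "ungauged_fluxes n N i' k'"
  have bij: "bij_betw g ?A ?B"
  proof (rule bij_betwI')
    fix x y assume x: "x \<in> ?A" and y: "y \<in> ?A"
    show "(g x = g y) = (x = y)"
    proof
      assume e: "g x = g y"
      hence "g x i k = g y i k" by simp
      hence c: "x i' k' = y i' k'" using x y assms(4,5) unfolding g_def shiftf_def ungauged_fluxes_def by auto
      have "shiftf n N (x i' k') (g x) = shiftf n N (y i' k') (g y)" using e c by simp
      thus "x = y" using x y unfolding g_def ungauged_fluxes_def by (simp add: shiftf_inv shiftf_0)
    qed simp
  next
    fix x assume x: "x \<in> ?A"
    show "g x \<in> ?B" using x assms(6,7) unfolding g_def ungauged_fluxes_def
      by (auto simp: shiftf_flux shiftf_dom) (simp add: shiftf_def)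
  next
    fix y assume y: "y \<in> ?B"
    define x where "x = shiftf n N (- y i k) y"
    have xA: "x \<in> ?A" using y assms(4,5) unfolding x_def ungauged_fluxes_def
      by (auto simp: shiftf_flux shiftf_dom) (simp add: shiftf_def)
    have "x i' k' = - y i k" using y assms(6,7) unfolding x_def ungauged_fluxes_def shiftf_def by auto
    hence "g x = y" using y unfolding g_def x_def ungauged_fluxes_def by (simp add: shiftf_inv shiftf_0)
    thus "\<exists>x\<in>?A. y = g x" using xA by auto
  qed
  have "hilbert_series n N E i k d = (\<integral>\<^sup>+ m. F m \<partial>count_space ?A)"
    unfolding hilbert_series_def F_def ..
  also have "\<dots> = (\<integral>\<^sup>+ m. F (g m) \<partial>count_space ?A)"
    unfolding g_def FS ..
  also have "\<dots> = (\<integral>\<^sup>+ m. F m \<partial>count_space ?B)"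
    by (rule nn_integral_bij_count_space[OF bij])
  also have "\<dots> = hilbert_series n N E i' k' d"
    unfolding hilbert_series_def F_def ..
  finally show "hilbert_series n N E i k d = hilbert_series n N E i' k' d" .
qed

end
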